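(* Let $\Lambda$ be a finite connected graph with $N$ sites, $\mathcal{H}=\bigotimes_{x\in\Lambda}\mathfrak{h}_x$ with each $\mathfrak{h}_x$ a copy of a finite-dimensional Hilbert space $\mathfrak{h}$, $\mathfrak{h}^s\subset\mathfrak{h}$ a subspace, and $\mathrm{Sym}^N(\mathfrak{h}^s)\subset\mathcal{H}$ the totally symmetric subspace of $\bigotimes_{x}\mathfrak{h}^s_x$. If a linear operator $\hat{H}$ on $\mathcal{H}$ leaves $\mathrm{Sym}^N(\mathfrak{h}^s)$ invariant, then $\hat{H}=\hat{H}_A+\hat{H}_Z$, where $\hat{H}_Z$ is totally symmetric (i.e. $\hat{\sigma}\hat{H}_Z\hat{\sigma}^{-1}=\hat{H}_Z$ for all site permutations $\sigma\in\mathfrak{S}_N$), $\hat{H}_A$ annihilates $\mathrm{Sym}^N(\mathfrak{h}^s)$, and $\hat{H}_A$ can be written as $$\hat{H}_A=\sum_{x\in\Lambda}\hat{h}^{(1)}_{[x]}\hat{P}_x+\sum_{\langle x,y\rangle}\hat{h}^{(2)}_{[xy]}\hat{P}_{xy},$$ where the second sum runs over nearest-neighbour pairs, each $\hat{P}_x$ (resp. $\hat{P}_{xy}$) is an orthogonal projector acting non-trivially only on site $x$ (resp. on sites $x,y$) and annihilating $\mathrm{Sym}^N(\mathfrak{h}^s)$, and $\hat{h}^{(1)}_{[x]},\hat{h}^{(2)}_{[xy]}$ are some (not necessarily local) operators on $\mathcal{H}$. In particular, vectors of $\mathrm{Sym}^N(\mathfrak{h}^s)$ that are eigenvectors of $\hat{H}_Z$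 are eigenvectors of $\hat{H}$ with the same eigenvalues.
   Context: For $\sigma\in\mathfrak{S}_N$, $\hat{\sigma}$ is the operator on $\mathcal{H}$ permuting the tensor factors: $\hat{\sigma}\bigotimes_x|e_x\rangle_x=\bigotimes_x|e_{\sigma(x)}\rangle_x$. $\mathrm{Sym}^N(\mathfrak{h}^s)=\{v\in\bigotimes_x\mathfrak{h}^s_x:\hat{\sigma}v=v\ \forall\sigma\}$. An operator annihilates a subspace if it maps all its vectors to $0$. *)

theory Defs
  imports "HOL-Analysis.Analysis"
begin

text \<open>Sites form a finite type 'v (so N = CARD('v)); the one-site Hilbert space
  is complex^'d (any finite-dimensional space, with orthonormal basis indexed by 'd).
  The total space H = tensor over sites of the one-site spaces is complex^('v => 'd),
  with orthonormal product basis e_c indexed by configurations c :: 'v => 'd.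
  Operators on H are matrices complex^('v=>'d)^('v=>'d) (row index first).\<close>

type_synonym ('v, 'd) state = "complex ^ ('v \<Rightarrow> 'd)"
type_synonym ('v, 'd) oper = "complex ^ ('v \<Rightarrow> 'd) ^ ('v \<Rightarrow> 'd)"

definition csubspace :: "(complex ^ 'n) set \<Rightarrow> bool" where
  "csubspace S \<longleftrightarrow> 0 \<in> S \<and> (\<forall>x\<in>S. \<forall>y\<in>S. x + y \<in> S) \<and> (\<forall>c. \<forall>x\<in>S. c *s x \<in> S)"

definition cspan :: "(complex ^ 'n) set \<Rightarrow> (complex ^ 'n) set" where
  "cspan A = {\<Sum>a\<in>T. g a *s a | T g. finite T \<and> T \<subseteq> A}"

text \<open>Product vector: tensor over all sites x of f x.\<close>
definition tensor_vec :: "('v::finite \<Rightarrow> complex ^ 'd::finite) \<Rightarrow> ('v, 'd) state" where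
  "tensor_vec f = (\<chi> c. \<Prod>x\<in>UNIV. f x $ c x)"

definition tensor_sub :: "(complex ^ 'd::finite) set \<Rightarrow> ('v::finite, 'd) state set" where
  "tensor_sub S = cspan {tensor_vec f | f. \<forall>x. f x \<in> S}"

text \<open>Site permutation operator: sigma-hat e_c = e_(c o sigma), i.e.
  sigma-hat (tensor_x |e_(c x)>_x) = tensor_x |e_(c (sigma x))>_x.\<close>
definition perm_op :: "('v::finite \<Rightarrow> 'v) \<Rightarrow> ('v, 'd::finite) oper" where
  "perm_op \<sigma> = (\<chi> c' c. if c' = c \<circ> \<sigma> then 1 else 0)"

definition Sym :: "(complex ^ 'd::finite) set \<Rightarrow> ('v::finite, 'd) state set" where
  "Sym S = {v \<in> tensor_sub S. \<forall>\<sigma>. \<sigma> permutes (UNIV::'v set) \<longrightarrow> perm_op \<sigma> *v v = v}"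

definition annihilates :: "('v::finite, 'd::finite) oper \<Rightarrow> ('v, 'd) state set \<Rightarrow> bool" where
  "annihilates M V \<longleftrightarrow> (\<forall>v\<in>V. M *v v = 0)"

definition totally_symmetric :: "('v::finite, 'd::finite) oper \<Rightarrow> bool" where
  "totally_symmetric M \<longleftrightarrow>
     (\<forall>\<sigma>. \<sigma> permutes (UNIV::'v set) \<longrightarrow> perm_op \<sigma> ** M ** matrix_inv (perm_op \<sigma>) = M)"

definition orth_proj :: "complex ^ 'n::finite ^ 'n \<Rightarrow> bool" where
  "orth_proj M \<longleftrightarrow> M ** M = M \<and> map_matrix cnj (transpose M) = M"

text \<open>M acts non-trivially only on the sites in X: M = B tensor Id_(complement of X).\<close>
definition acts_only_on :: "'v set \<Rightarrow> ('v::finite, 'd::finite) oper \<Rightarrow> bool" where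
  "acts_only_on X M \<longleftrightarrow> (\<exists>B. \<forall>c c'. M $ c $ c' =
      (if \<forall>y. y \<notin> X \<longrightarrow> c y = c' y then B (restrict c X) (restrict c' X) else 0))"

end

theory Submission
  imports Defs "HOL-Combinatorics.Permutations"
begin


definition hip :: "complex ^ 'n::finite \<Rightarrow> complex ^ 'n \<Rightarrow> complex" where
  "hip u w = (\<Sum>i\<in>UNIV. u $ i * cnj (w $ i))"

lemma hip_diff: "hip (a - b) w = hip a w - hip b w"
  by (simp add: hip_def algebra_simps sum_subtractf)
lemma hip_add: "hip (a + b) w = hip a w + hip b w"
  by (simp add: hip_def algebra_simps sum.distrib)
lemma hip_scale: "hip (c *s a) w = c * hip a w"
  by (simp add: hip_def sum_distrib_left mult.assoc)
lemma hip_scale_r: "hip a (c *s w) = cnj c * hip a w"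
  by (simp add: hip_def sum_distrib_left algebra_simps)
lemma hip_sum: "hip (\<Sum>j\<in>J. f j) w = (\<Sum>j\<in>J. hip (f j) w)"
  by (simp add: hip_def sum_distrib_right sum.swap[of _ UNIV J])
lemma hip_zero[simp]: "hip 0 w = 0" by (simp add: hip_def)
lemma hip_cnj: "hip a b = cnj (hip b a)"
  by (simp add: hip_def mult.commute)
lemma hip_axis: "hip u (axis i 1) = u $ i"
  by (simp add: hip_def axis_def if_distrib cong: if_cong)
lemma inner_hip: "inner u w = Re (hip u w)"
  by (simp add: inner_vec_def hip_def inner_complex_def Re_sum)
lemma hip_self0: "hip d d = 0 \<Longrightarrow> d = 0"
proof -
  assume h: "hip d d = 0"
  have "hip d d = (\<Sum>i\<in>UNIV. complex_of_real ((cmod (d $ i))\<^sup>2))"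
    unfolding hip_def by (rule sum.cong[OF refl]) (rule complex_norm_square[symmetric])
  then have "(\<Sum>i\<in>UNIV. (cmod (d $ i))\<^sup>2) = 0" using h
    by (metis of_real_eq_0_iff of_real_sum)
  then have "\<forall>i\<in>UNIV. (cmod (d $ i))\<^sup>2 = 0"
    by (subst sum_nonneg_eq_0_iff[symmetric]) auto
  then show "d = 0" by (simp add: vec_eq_iff)
qed

lemma csub_sum: "csubspace S \<Longrightarrow> (\<And>j. j \<in> J \<Longrightarrow> f j \<in> S) \<Longrightarrow> (\<Sum>j\<in>J. f j) \<in> S"
  unfolding csubspace_def
  by (induct J rule: infinite_finite_induct) auto

lemma csub_diff: "csubspace S \<Longrightarrow> a \<in> S \<Longrightarrow> b \<in> S \<Longrightarrow> a - b \<in> S"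
proof -
  assume S: "csubspace S" and a: "a \<in> S" and b: "b \<in> S"
  have "(-1) *s b \<in> S" using S b unfolding csubspace_def by blast
  then have "a + (-1) *s b \<in> S" using S a unfolding csubspace_def by blast
  moreover have "a + (-1) *s b = a - b" by (simp add: vec_eq_iff)
  ultimately show ?thesis by simp
qed

lemma scaleR_vec_c: "c *\<^sub>R (x :: complex ^ 'n) = (complex_of_real c) *s x"
  by (simp add: vec_eq_iff scaleR_conv_of_real[where 'a=complex])

lemma csub_real: "csubspace S \<Longrightarrow> subspace S"
  unfolding subspace_def csubspace_def scaleR_vec_c by blast

lemma pr_exists:
  assumes S: "csubspace S"
  shows "\<exists>y. y \<in> S \<and> (\<forall>w\<in>S. hip (x - y) w = 0)"
proof -
  have sp: "span S = S" using csub_real[OF S] by (simp add: span_eq_iff)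
  obtain y z where y: "y \<in> span S" and z: "\<And>w. w \<in> span S \<Longrightarrow> orthogonal z w" and xy: "x = y + z"
    using orthogonal_subspace_decomp_exists[of S x] by blast
  have "hip z w = 0" if w: "w \<in> S" for w
  proof -
    have "\<i> *s w \<in> S" using S w unfolding csubspace_def by blast
    then have "Re (hip z (\<i> *s w)) = 0" using z sp by (metis inner_hip orthogonal_def)
    then have 1: "Im (hip z w) = 0" by (simp add: hip_scale_r)
    have "Re (hip z w) = 0" using z sp w by (metis inner_hip orthogonal_def)
    with 1 show ?thesis by (simp add: complex_eq_iff)
  qed
  then show ?thesis using y sp xy by (intro exI[of _ y]) auto
qed

definition pr :: "(complex ^ 'd::finite) set \<Rightarrow> complex ^ 'd \<Rightarrow> complex ^ 'd" where
  "pr S x = (SOME y. y \<in> S \<and> (\<forall>w\<in>S. hip (x - y) w = 0))"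

lemma pr: "csubspace S \<Longrightarrow> pr S x \<in> S \<and> (\<forall>w\<in>S. hip (x - pr S x) w = 0)"
  unfolding pr_def by (rule someI_ex, rule pr_exists)

lemma pr_unique:
  assumes S: "csubspace S" and y: "y \<in> S" and o: "\<forall>w\<in>S. hip (x - y) w = 0"
  shows "pr S x = y"
proof -
  have d: "pr S x - y \<in> S" using pr[OF S, of x] y S by (simp add: csub_diff)
  have "hip (pr S x - y) (pr S x - y) = hip (x - y) (pr S x - y) - hip (x - pr S x) (pr S x - y)"
    by (simp add: hip_diff[symmetric])
  also have "\<dots> = 0" using o pr[OF S, of x] d by simp
  finally show ?thesis using hip_self0 by fastforce
qed

definition pmat :: "(complex ^ 'd::finite) set \<Rightarrow> complex ^ 'd ^ 'd" where
  "pmat S = (\<chi> i j. pr S (axis j 1) $ i)"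

lemma pmat_mv:
  assumes S: "csubspace S"
  shows "pmat S *v v = pr S v"
proof -
  have eq: "pr S v = (\<Sum>j\<in>UNIV. v $ j *s pr S (axis j 1))"
  proof (rule pr_unique[OF S])
    show "(\<Sum>j\<in>UNIV. v $ j *s pr S (axis j 1)) \<in> S"
      using S pr[OF S] by (intro csub_sum) (auto simp: csubspace_def)
    have e: "v - (\<Sum>j\<in>UNIV. v $ j *s pr S (axis j 1)) = (\<Sum>j\<in>UNIV. v $ j *s (axis j 1 - pr S (axis j 1)))"
      by (subst (1) basis_expansion[symmetric]) (simp add: sum_subtractf vector_ssub_ldistrib)
    show "\<forall>w\<in>S. hip (v - (\<Sum>j\<in>UNIV. v $ j *s pr S (axis j 1))) w = 0"
    proof
      fix w assume w: "w \<in> S"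
      have "hip (axis j 1 - pr S (axis j 1)) w = 0" for j using pr[OF S] w by blast
      then have "hip (axis j 1) w = hip (pr S (axis j 1)) w" for j by (simp add: hip_diff)
      then show "hip (v - (\<Sum>j\<in>UNIV. v $ j *s pr S (axis j 1))) w = 0"
        unfolding e by (simp add: hip_sum hip_scale hip_diff)
    qed
  qed
  have "pmat S *v v = (\<Sum>j\<in>UNIV. v $ j *s pr S (axis j 1))"
    by (simp add: vec_eq_iff pmat_def matrix_vector_mult_def mult.commute sum_component)
  then show ?thesis using eq by simp
qed

lemma pmat_in: "csubspace S \<Longrightarrow> pmat S *v v \<in> S"
  using pr pmat_mv by metis

lemma pmat_fix: "csubspace S \<Longrightarrow> v \<in> S \<Longrightarrow> pmat S *v v = v"
  using pmat_mv pr_unique by fastforce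

lemma pmat_idem: "csubspace S \<Longrightarrow> pmat S ** pmat S = pmat S"
  by (simp add: matrix_eq matrix_vector_mul_assoc[symmetric] pmat_fix pmat_in)

lemma pmat_herm:
  assumes S: "csubspace S"
  shows "map_matrix cnj (transpose (pmat S)) = pmat S"
proof -
  have key: "pmat S $ i $ j = hip (pr S (axis j 1)) (pr S (axis i 1))" for i j
  proof -
    have "pmat S $ i $ j = hip (pr S (axis j 1)) (axis i 1)" by (simp add: pmat_def hip_axis)
    also have "\<dots> = hip (pr S (axis j 1)) (pr S (axis i 1)) + hip (pr S (axis j 1)) (axis i 1 - pr S (axis i 1))"
    proof -
      have "hip (pr S (axis j 1)) (axis i 1 - pr S (axis i 1)) = cnj (hip (axis i 1 - pr S (axis i 1)) (pr S (axis j 1)))"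
        by (rule hip_cnj)
      also have "\<dots> = cnj (hip (axis i 1) (pr S (axis j 1))) - cnj (hip (pr S (axis i 1)) (pr S (axis j 1)))"
        by (simp add: hip_diff)
      also have "\<dots> = hip (pr S (axis j 1)) (axis i 1) - hip (pr S (axis j 1)) (pr S (axis i 1))"
        by (simp only: hip_cnj[of "pr S (axis j 1)" "axis i 1"] hip_cnj[of "pr S (axis j 1)" "pr S (axis i 1)"])
      finally show ?thesis by simp
    qed
    also have "hip (pr S (axis j 1)) (axis i 1 - pr S (axis i 1)) = 0"
    proof -
      have "hip (axis i 1 - pr S (axis i 1)) (pr S (axis j 1)) = 0"
        using pr[OF S, of "axis i 1"] pr[OF S, of "axis j 1"] by simp
      then show ?thesis by (simp only: hip_cnj[of "pr S (axis j 1)"] complex_cnj_zero)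
    qed
    finally show ?thesis by simp
  qed
  have c: "cnj (pmat S $ j $ i) = pmat S $ i $ j" for i j
    unfolding key by (rule hip_cnj[symmetric])
  show ?thesis
  proof (subst vec_eq_iff, intro allI)
    fix i
    show "map_matrix cnj (transpose (pmat S)) $ i = pmat S $ i"
    proof (subst vec_eq_iff, intro allI)
      fix j
      have "map_matrix cnj (transpose (pmat S)) $ i $ j = cnj (pmat S $ j $ i)"
        by (simp only: nth_map_matrix transpose_def vec_lambda_beta)
      then show "map_matrix cnj (transpose (pmat S)) $ i $ j = pmat S $ i $ j" using c by simp
    qed
  qed
qed



definition agree :: "'v set \<Rightarrow> ('v \<Rightarrow> 'd) \<Rightarrow> ('v \<Rightarrow> 'd) \<Rightarrow> bool" where
  "agree X a b \<longleftrightarrow> (\<forall>y. y \<notin> X \<longrightarrow> a y = b y)"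

lemma agree_sym: "agree X a b = agree X b a" unfolding agree_def by auto

lemma agree_upd: "agree {x} (a(x := d)) b = agree {x} a b"
  unfolding agree_def by auto

lemma sum_agree1:
  fixes F :: "('v::finite \<Rightarrow> 'd::finite) \<Rightarrow> complex"
  shows "(\<Sum>c\<in>UNIV. if agree {x} b c then F c else 0) = (\<Sum>d\<in>UNIV. F (b(x := d)))"
proof -
  have "(\<Sum>c\<in>UNIV. if agree {x} b c then F c else 0) = (\<Sum>c\<in>{c. agree {x} b c}. F c)"
    by (simp add: sum.If_cases Int_def)
  also have "{c. agree {x} b c} = range (\<lambda>d. b(x := d))"
  proof (intro equalityI subsetI)
    fix c assume "c \<in> {c. agree {x} b c}"
    then have "c = b(x := c x)" unfolding agree_def by (intro ext) auto
    then show "c \<in> range (\<lambda>d. b(x := d))" by blast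
  qed (auto simp: agree_def)
  also have "sum F \<dots> = (\<Sum>d\<in>UNIV. F (b(x := d)))"
    by (subst sum.reindex) (auto simp: inj_on_def dest: fun_cong[where x = x])
  finally show ?thesis .
qed

definition loc :: "'v \<Rightarrow> complex ^ 'd ^ 'd \<Rightarrow> ('v::finite, 'd::finite) oper" where
  "loc x M = (\<chi> a b. if agree {x} a b then M $ a x $ b x else 0)"

lemma loc_mv: "(loc x M *v v) $ a = (\<Sum>d\<in>UNIV. M $ a x $ d * v $ (a(x := d)))"
proof -
  have "(loc x M *v v) $ a = (\<Sum>c\<in>UNIV. if agree {x} a c then M $ a x $ c x * v $ c else 0)"
    by (auto simp: loc_def matrix_vector_mult_def intro!: sum.cong)
  also have "\<dots> = (\<Sum>d\<in>UNIV. M $ a x $ d * v $ (a(x := d)))"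
    by (subst sum_agree1) simp
  finally show ?thesis .
qed

lemma prod_upd: "(\<Prod>y\<in>UNIV. g y ((a(x := d)) y)) = g x d * (\<Prod>y\<in>UNIV - {x}. g y (a y))"
  for g :: "'v::finite \<Rightarrow> 'd \<Rightarrow> complex"
proof -
  have "(\<Prod>y\<in>UNIV. g y ((a(x := d)) y)) = g x d * (\<Prod>y\<in>UNIV - {x}. g y ((a(x := d)) y))"
    by (subst prod.remove[of _ x]) auto
  also have "(\<Prod>y\<in>UNIV - {x}. g y ((a(x := d)) y)) = (\<Prod>y\<in>UNIV - {x}. g y (a y))"
    by (rule prod.cong) auto
  finally show ?thesis .
qed

lemma loc_tensor: "loc x M *v tensor_vec f = tensor_vec (f(x := M *v f x))"
proof -
  have "(loc x M *v tensor_vec f) $ a = tensor_vec (f(x := M *v f x)) $ a" for a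
  proof -
    have "(loc x M *v tensor_vec f) $ a = (\<Sum>d\<in>UNIV. M $ a x $ d * (f x $ d * (\<Prod>y\<in>UNIV - {x}. f y $ a y)))"
      unfolding loc_mv tensor_vec_def vec_lambda_beta
      by (rule sum.cong[OF refl]) (subst prod_upd[where g = "\<lambda>y e. f y $ e"], simp)
    also have "\<dots> = (M *v f x) $ a x * (\<Prod>y\<in>UNIV - {x}. f y $ a y)"
      by (simp add: matrix_vector_mult_def sum_distrib_right mult.assoc)
    also have "\<dots> = tensor_vec (f(x := M *v f x)) $ a"
    proof -
      have "tensor_vec (f(x := M *v f x)) $ a = (\<Prod>y\<in>UNIV. (f(x := M *v f x)) y $ a y)"
        by (simp add: tensor_vec_def)
      also have "\<dots> = (M *v f x) $ a x * (\<Prod>y\<in>UNIV - {x}. (f(x := M *v f x)) y $ a y)"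
        by (subst prod.remove[of _ x]) auto
      also have "(\<Prod>y\<in>UNIV - {x}. (f(x := M *v f x)) y $ a y) = (\<Prod>y\<in>UNIV - {x}. f y $ a y)"
        by (rule prod.cong) auto
      finally show ?thesis by (rule sym)
    qed
    finally show ?thesis .
  qed
  then show ?thesis by (simp add: vec_eq_iff)
qed

lemma loc_mult: "loc x M ** loc x M' = loc x (M ** M')"
proof -
  have "(loc x M ** loc x M') $ a $ b = loc x (M ** M') $ a $ b" for a b
  proof -
    have "(loc x M ** loc x M') $ a $ b = (\<Sum>c\<in>UNIV. if agree {x} a c then M $ a x $ c x * loc x M' $ c $ b else 0)"
      by (auto simp: matrix_matrix_mult_def loc_def intro!: sum.cong)
    also have "\<dots> = (\<Sum>d\<in>UNIV. M $ a x $ d * loc x M' $ (a(x := d)) $ b)"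
      by (subst sum_agree1) simp
    also have "\<dots> = (\<Sum>d\<in>UNIV. M $ a x $ d * (if agree {x} a b then M' $ d $ b x else 0))"
      by (rule sum.cong[OF refl]) (simp add: loc_def agree_upd)
    also have "\<dots> = loc x (M ** M') $ a $ b"
      by (simp add: loc_def matrix_matrix_mult_def if_distrib cong: if_cong)
    finally show ?thesis .
  qed
  then show ?thesis by (simp add: vec_eq_iff)
qed

lemma loc_herm: "map_matrix cnj (transpose (loc x M)) = loc x (map_matrix cnj (transpose M))"
  by (simp add: vec_eq_iff loc_def transpose_def agree_sym)

lemma loc_one_minus: "loc x (mat 1 - M) = mat 1 - loc x M"
proof -
  have "a = b \<longleftrightarrow> agree {x} a b \<and> a x = b x" for a b :: "'a \<Rightarrow> 'b"
    unfolding agree_def by (metis singletonD ext)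
  then show ?thesis by (simp add: vec_eq_iff loc_def mat_def)
qed

lemma loc_acts: "acts_only_on {x} (loc x M)"
  unfolding acts_only_on_def
  by (rule exI[of _ "\<lambda>f g. M $ f x $ g x"]) (auto simp: loc_def agree_def)



lemma perm_mult: "perm_op \<sigma> ** perm_op \<rho> = (perm_op (\<rho> \<circ> \<sigma>) :: ('v::finite, 'd::finite) oper)"
proof -
  have "(perm_op \<sigma> ** perm_op \<rho> :: ('v, 'd) oper) $ a $ b = perm_op (\<rho> \<circ> \<sigma>) $ a $ b" for a b
  proof -
    have "(perm_op \<sigma> ** perm_op \<rho> :: ('v, 'd) oper) $ a $ b
        = (\<Sum>c\<in>UNIV. (if a = c \<circ> \<sigma> then 1 else 0) * (if c = b \<circ> \<rho> then 1 else 0))"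
      by (simp add: matrix_matrix_mult_def perm_op_def)
    also have "\<dots> = (\<Sum>c\<in>UNIV. if c = b \<circ> \<rho> then (if a = c \<circ> \<sigma> then 1 else 0) else 0)"
      by (rule sum.cong) auto
    also have "\<dots> = (if a = b \<circ> \<rho> \<circ> \<sigma> then 1 else 0)"
      by (simp add: sum.delta')
    finally show ?thesis by (simp add: perm_op_def o_assoc)
  qed
  then show ?thesis by (simp add: vec_eq_iff)
qed

lemma perm_id: "perm_op id = mat 1"
  by (simp add: vec_eq_iff perm_op_def mat_def)

lemma perm_inv1: "\<sigma> permutes UNIV \<Longrightarrow> perm_op \<sigma> ** perm_op (inv \<sigma>) = mat 1"
  by (simp add: perm_mult permutes_inv_o perm_id)
lemma perm_inv2: "\<sigma> permutes UNIV \<Longrightarrow> perm_op (inv \<sigma>) ** perm_op \<sigma> = mat 1"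
  by (simp add: perm_mult permutes_inv_o perm_id)

lemma perm_matrix_inv:
  assumes "\<sigma> permutes UNIV"
  shows "matrix_inv (perm_op \<sigma> :: ('v::finite, 'd::finite) oper) = perm_op (inv \<sigma>)"
proof -
  let ?P = "perm_op \<sigma> :: ('v, 'd) oper"
  have ex: "\<exists>A'. ?P ** A' = mat 1 \<and> A' ** ?P = mat 1"
    using perm_inv1[OF assms] perm_inv2[OF assms] by blast
  then have h: "?P ** matrix_inv ?P = mat 1 \<and> matrix_inv ?P ** ?P = mat 1"
    unfolding matrix_inv_def by (rule someI_ex)
  have "matrix_inv ?P = (perm_op (inv \<sigma>) ** ?P) ** matrix_inv ?P"
    by (simp only: perm_inv2[OF assms] matrix_mul_lid)
  also have "\<dots> = perm_op (inv \<sigma>)"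
    using h by (simp add: matrix_mul_assoc[symmetric])
  finally show ?thesis .
qed

lemma perm_mv:
  assumes "\<sigma> permutes UNIV"
  shows "(perm_op \<sigma> *v v) $ a = v $ (a \<circ> inv \<sigma>)"
proof -
  have eq: "(a = c \<circ> \<sigma>) = (c = a \<circ> inv \<sigma>)" for c
    using assms by (auto simp: fun_eq_iff permutes_inverses)
  have "(perm_op \<sigma> *v v) $ a = (\<Sum>c\<in>UNIV. (if c = a \<circ> inv \<sigma> then 1 else 0) * v $ c)"
    by (simp add: matrix_vector_mult_def perm_op_def eq)
  also have "\<dots> = (\<Sum>c\<in>UNIV. if c = a \<circ> inv \<sigma> then v $ c else 0)"
    by (rule sum.cong) auto
  finally have "(perm_op \<sigma> *v v) $ a = (\<Sum>c\<in>UNIV. if c = a \<circ> inv \<sigma> then v $ c else 0)" .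
  then show ?thesis by (simp add: sum.delta')
qed

lemma perm_tensor:
  assumes "\<sigma> permutes UNIV"
  shows "perm_op \<sigma> *v tensor_vec f = tensor_vec (f \<circ> \<sigma>)"
proof -
  have "(perm_op \<sigma> *v tensor_vec f) $ a = tensor_vec (f \<circ> \<sigma>) $ a" for a
  proof -
    have "(perm_op \<sigma> *v tensor_vec f) $ a = (\<Prod>x\<in>UNIV. f x $ a (inv \<sigma> x))"
      by (simp add: perm_mv[OF assms] tensor_vec_def)
    also have "\<dots> = (\<Prod>z\<in>UNIV. f (\<sigma> z) $ a (inv \<sigma> (\<sigma> z)))"
      by (subst prod.permute[OF assms]) (simp add: o_def)
    also have "\<dots> = tensor_vec (f \<circ> \<sigma>) $ a"
      using assms by (simp add: tensor_vec_def permutes_inverses)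
    finally show ?thesis .
  qed
  then show ?thesis by (simp add: vec_eq_iff)
qed

lemma ifmul: "(if P then 1 else 0) * (x::complex) = (if P then x else 0)" by simp
lemma ifmul2: "(if P then c else 0) * (x::complex) = (if P then c * x else 0)" by simp

definition Aop :: "('v \<Rightarrow> 'v) \<Rightarrow> ('v::finite, 'd::finite) oper" where
  "Aop \<tau> = (\<chi> a b. ((if a = b then 1 else 0) - (if a = b \<circ> \<tau> then 1 else 0)) / 2)"

lemma Aop_mv: "Aop \<tau> *v v = (1/2) *s (v - perm_op \<tau> *v v)"
  by (simp add: vec_eq_iff Aop_def perm_op_def matrix_vector_mult_def sum_subtractf
      sum_divide_distrib[symmetric] left_diff_distrib sum_distrib_left ifmul)

lemma mat2_Aop: "mat 2 ** (Aop \<tau> :: ('v::finite, 'd::finite) oper) = mat 1 - perm_op \<tau>"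
proof -
  have "(mat c ** M) $ a $ b = c * M $ a $ b" for c and M :: "('v, 'd) oper" and a b
    by (simp add: matrix_matrix_mult_def mat_def ifmul2)
  then show ?thesis by (simp add: vec_eq_iff Aop_def perm_op_def mat_def)
qed

lemma transpose_invol: "Transposition.transpose x y \<circ> Transposition.transpose x y = id"
  by (simp add: fun_eq_iff)

lemma Aop_orth:
  fixes x y :: "'v::finite"
  shows "orth_proj (Aop (Transposition.transpose x y) :: ('v, 'd::finite) oper)"
proof -
  let ?t = "Transposition.transpose x y"
  let ?T = "perm_op ?t :: ('v, 'd) oper"
  have TT: "?T *v (?T *v v) = v" for v
    by (simp add: matrix_vector_mul_assoc perm_mult transpose_invol perm_id)
  have idem: "Aop ?t ** Aop ?t = (Aop ?t :: ('v, 'd) oper)"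
  proof (subst matrix_eq, intro allI)
    fix v :: "('v, 'd) state"
    have "(Aop ?t ** Aop ?t) *v v = Aop ?t *v (Aop ?t *v v)" by (simp add: matrix_vector_mul_assoc)
    also have "\<dots> = (1/2) *s ((1/2) *s (v - ?T *v v) - ?T *v ((1/2) *s (v - ?T *v v)))"
      by (simp add: Aop_mv)
    also have "\<dots> = (1/2) *s (v - ?T *v v)"
      by (simp add: vector_scalar_commute matrix_vector_mult_diff_distrib TT vec_eq_iff algebra_simps)
    finally show "(Aop ?t ** Aop ?t) *v v = Aop ?t *v v" by (simp add: Aop_mv)
  qed
  have sym: "(a = b \<circ> ?t) = (b = a \<circ> ?t)" for a b :: "'v \<Rightarrow> 'd"
    by (auto simp: fun_eq_iff)
  have herm: "map_matrix cnj (transpose (Aop ?t)) = (Aop ?t :: ('v, 'd) oper)"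
  proof -
    have e: "(Aop ?t :: ('v, 'd) oper) $ b $ a = Aop ?t $ a $ b" for a b
      unfolding Aop_def vec_lambda_beta using sym[of a b] by (simp add: eq_commute[of a b])
    have r: "cnj ((Aop ?t :: ('v, 'd) oper) $ a $ b) = Aop ?t $ a $ b" for a b
      by (simp add: Aop_def)
    show ?thesis unfolding vec_eq_iff transpose_def nth_map_matrix vec_lambda_beta using e r by simp
  qed
  show ?thesis unfolding orth_proj_def using idem herm by blast
qed



lemma cspan_vec: "cspan A = vec.span A"
  by (simp add: cspan_def vec.span_explicit)

lemma tensor_sub_span: "tensor_sub S = vec.span {tensor_vec f | f. \<forall>x. f x \<in> S}"
  by (simp add: tensor_sub_def cspan_vec)

lemma ann_tensor:
  assumes "\<And>f. (\<forall>x. f x \<in> S) \<Longrightarrow> M *v tensor_vec f = 0"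
    and "v \<in> tensor_sub S"
  shows "M *v v = 0"
proof -
  have "v \<in> vec.span {tensor_vec f | f. \<forall>x. f x \<in> S}" using assms(2) tensor_sub_span by blast
  then show ?thesis
  proof (induct rule: vec.span_induct)
    show "vec.subspace {v. M *v v = 0}"
      by (simp add: vec.subspace_def matrix_vector_right_distrib vector_scalar_commute)
  qed (use assms(1) in auto)
qed

lemma fix_tensor:
  assumes "\<And>f. (\<forall>x. f x \<in> S) \<Longrightarrow> M *v tensor_vec f = tensor_vec f"
    and "v \<in> tensor_sub S"
  shows "M *v v = v"
proof -
  have "(M - mat 1) *v v = 0"
    by (rule ann_tensor[OF _ assms(2)]) (simp add: matrix_vector_mult_diff_rdistrib assms(1))
  then show ?thesis by (simp add: matrix_vector_mult_diff_rdistrib)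
qed

lemma tensor_zero: "f x = 0 \<Longrightarrow> tensor_vec f = 0"
  by (simp add: vec_eq_iff tensor_vec_def prod_zero[of UNIV] exI[of _ x])

definition Qop :: "(complex ^ 'd) set \<Rightarrow> 'v \<Rightarrow> ('v::finite, 'd::finite) oper" where
  "Qop S x = loc x (mat 1 - pmat S)"

lemma Q_orth:
  fixes S :: "(complex ^ 'd::finite) set" and x :: "'v::finite"
  assumes S: "csubspace S"
  shows "orth_proj (Qop S x :: ('v, 'd) oper)"
proof -
  have "(mat 1 - pmat S) ** (mat 1 - pmat S) = mat 1 - pmat S"
    by (simp add: matrix_eq matrix_vector_mult_diff_rdistrib matrix_vector_mul_assoc[symmetric]
        matrix_vector_mult_diff_distrib pmat_fix pmat_in S)
  moreover have "map_matrix cnj (transpose (mat 1 - pmat S)) = mat 1 - pmat S"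
  proof -
    have h: "cnj (pmat S $ j $ i) = pmat S $ i $ j" for i j
    proof -
      have "map_matrix cnj (transpose (pmat S)) $ i $ j = pmat S $ i $ j" using pmat_herm[OF S] by simp
      then show ?thesis by (simp add: transpose_def)
    qed
    show ?thesis by (simp add: vec_eq_iff transpose_def mat_def h)
  qed
  ultimately show ?thesis
    unfolding orth_proj_def Qop_def by (simp add: loc_mult loc_herm)
qed

lemma Q_ann:
  fixes S :: "(complex ^ 'd::finite) set" and v :: "('v::finite, 'd) state"
  assumes S: "csubspace S" and v: "v \<in> Sym S"
  shows "Qop S x *v v = 0"
proof (rule ann_tensor)
  show "v \<in> tensor_sub S" using v by (simp add: Sym_def)
  fix f :: "'v \<Rightarrow> complex ^ 'd" assume "\<forall>x. f x \<in> S"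
  then have "(mat 1 - pmat S) *v f x = 0" using S
    by (simp add: matrix_vector_mult_diff_rdistrib pmat_fix)
  then show "Qop S x *v tensor_vec f = 0"
    by (simp add: Qop_def loc_tensor) (rule tensor_zero[of _ x], simp)
qed

definition swp :: "'v set \<Rightarrow> 'v \<Rightarrow> 'v" where
  "swp e = (\<lambda>z. if z \<in> e then (THE w. w \<in> e \<and> w \<noteq> z) else z)"

lemma swp_pair: "x \<noteq> y \<Longrightarrow> swp {x, y} = Transposition.transpose x y"
proof (rule ext)
  fix z assume xy: "x \<noteq> y"
  show "swp {x, y} z = Transposition.transpose x y z"
  proof (cases "z = x")
    case True
    have "(THE w. w \<in> {x, y} \<and> w \<noteq> z) = y" using xy True by (intro the_equality) auto
    then show ?thesis using True by (simp add: swp_def)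
  next
    case False
    show ?thesis
    proof (cases "z = y")
      case True
      have "(THE w. w \<in> {x, y} \<and> w \<noteq> z) = x" using xy True by (intro the_equality) auto
      then show ?thesis using True xy by (simp add: swp_def)
    next
      case False
      then show ?thesis using \<open>z \<noteq> x\<close> by (simp add: swp_def)
    qed
  qed
qed

definition P2op :: "'v set \<Rightarrow> ('v::finite, 'd::finite) oper" where
  "P2op e = Aop (swp e)"

lemma Aop_acts:
  fixes x y :: "'v::finite"
  shows "acts_only_on {x, y} (Aop (Transposition.transpose x y) :: ('v, 'd::finite) oper)"
proof -
  let ?t = "Transposition.transpose x y"
  let ?X = "{x, y}"
  define B where "B = (\<lambda>f g :: 'v \<Rightarrow> 'd. ((if f = g then 1 else 0)
      - (if f = (\<lambda>z. if z \<in> ?X then g (?t z) else undefined) then 1 else 0)) / (2::complex))"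
  have tX: "z \<in> ?X \<Longrightarrow> ?t z \<in> ?X" for z by auto
  have tn: "z \<notin> ?X \<Longrightarrow> ?t z = z" for z by auto
  have "(Aop ?t :: ('v, 'd) oper) $ c $ c' =
      (if \<forall>z. z \<notin> ?X \<longrightarrow> c z = c' z then B (restrict c ?X) (restrict c' ?X) else 0)" for c c'
  proof (cases "\<forall>z. z \<notin> ?X \<longrightarrow> c z = c' z")
    case True
    have e1: "(c = c') = (restrict c ?X = restrict c' ?X)"
      using True by (auto simp: fun_eq_iff restrict_def)
    have e2: "(c = c' \<circ> ?t) = (restrict c ?X = (\<lambda>z. if z \<in> ?X then restrict c' ?X (?t z) else undefined))"
    proof
      assume "c = c' \<circ> ?t" then show "restrict c ?X = (\<lambda>z. if z \<in> ?X then restrict c' ?X (?t z) else undefined)"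
        using tX by (auto simp: fun_eq_iff restrict_def simp del: transpose_eq_iff)
    next
      assume h: "restrict c ?X = (\<lambda>z. if z \<in> ?X then restrict c' ?X (?t z) else undefined)"
      show "c = c' \<circ> ?t"
      proof
        fix z show "c z = (c' \<circ> ?t) z"
        proof (cases "z \<in> ?X")
          case True
          then show ?thesis using fun_cong[OF h, of z] tX[OF True] by (simp add: restrict_def)
        next
          case False
          then show ?thesis using True tn[OF False] by simp
        qed
      qed
    qed
    show ?thesis using True by (simp add: Aop_def B_def e1 e2)
  next
    case False
    then obtain z where z: "z \<notin> ?X" "c z \<noteq> c' z" by blast
    have "c \<noteq> c'" using z by auto
    moreover have "c \<noteq> c' \<circ> ?t"
    proof
      assume "c = c' \<circ> ?t"
      then have "c z = c' (?t z)" by simp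
      then show False using z tn[OF z(1)] by simp
    qed
    ultimately have "(Aop ?t :: ('v, 'd) oper) $ c $ c' = 0" by (simp add: Aop_def)
    then show ?thesis by (simp only: if_not_P[OF False])
  qed
  then show ?thesis unfolding acts_only_on_def by blast
qed

lemma Aop_ann:
  assumes v: "v \<in> Sym S"
  shows "(Aop (Transposition.transpose x y) :: ('v::finite, 'd::finite) oper) *v v = 0"
proof -
  have "perm_op (Transposition.transpose x y) *v v = v"
    using v permutes_swap_id[of x UNIV y] by (simp add: Sym_def)
  then show ?thesis by (simp add: Aop_mv)
qed



lemma mm_sum_l: "K ** sum f I = (\<Sum>i\<in>I. K ** f i)"
  by (induct I rule: infinite_finite_induct) (auto simp: matrix_add_ldistrib)

lemma matrix_add_rdistrib': "(A + B) ** C = A ** C + B ** C"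
  by (simp add: vec_eq_iff matrix_matrix_mult_def sum.distrib distrib_right)

lemma mm_sum_r: "sum f I ** K = (\<Sum>i\<in>I. f i ** K)"
  by (induct I rule: infinite_finite_induct) (auto simp: matrix_add_rdistrib')

lemma matrix_sub_ldistrib': "(A :: 'a::ring_1^'n^'m) ** (B - C) = A ** B - A ** C"
  by (simp add: vec_eq_iff matrix_matrix_mult_def sum_subtractf right_diff_distrib)

lemma matrix_sub_rdistrib': "((A :: 'a::ring_1^'n^'m) - B) ** C = A ** C - B ** C"
  by (simp add: vec_eq_iff matrix_matrix_mult_def sum_subtractf left_diff_distrib)

definition Ed :: "('v \<Rightarrow> 'v \<Rightarrow> bool) \<Rightarrow> 'v set set" where
  "Ed E = {{x, y} | x y. E x y}"

definition inL :: "(complex ^ 'd) set \<Rightarrow> ('v \<Rightarrow> 'v \<Rightarrow> bool) \<Rightarrow> ('v::finite, 'd::finite) oper \<Rightarrow> bool" where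
  "inL S E M \<longleftrightarrow> (\<exists>h1 h2. M = (\<Sum>x\<in>UNIV. h1 x ** Qop S x) + (\<Sum>e\<in>Ed E. h2 e ** P2op e))"

lemma inL_add: "inL S E A \<Longrightarrow> inL S E B \<Longrightarrow> inL S E (A + B)"
proof -
  assume "inL S E A" "inL S E B"
  then obtain a1 a2 b1 b2 where A: "A = (\<Sum>x\<in>UNIV. a1 x ** Qop S x) + (\<Sum>e\<in>Ed E. a2 e ** P2op e)"
    and B: "B = (\<Sum>x\<in>UNIV. b1 x ** Qop S x) + (\<Sum>e\<in>Ed E. b2 e ** P2op e)"
    unfolding inL_def by blast
  show ?thesis unfolding inL_def
    by (rule exI[of _ "\<lambda>x. a1 x + b1 x"], rule exI[of _ "\<lambda>e. a2 e + b2 e"])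
       (simp add: A B matrix_add_rdistrib' sum.distrib algebra_simps)
qed

lemma inL_lmul: "inL S E A \<Longrightarrow> inL S E (K ** A)"
proof -
  assume "inL S E A"
  then obtain a1 a2 where A: "A = (\<Sum>x\<in>UNIV. a1 x ** Qop S x) + (\<Sum>e\<in>Ed E. a2 e ** P2op e)"
    unfolding inL_def by blast
  show ?thesis unfolding inL_def
    by (rule exI[of _ "\<lambda>x. K ** a1 x"], rule exI[of _ "\<lambda>e. K ** a2 e"])
       (simp add: A matrix_add_ldistrib mm_sum_l matrix_mul_assoc)
qed

lemma inL_zero: "inL S E 0"
  unfolding inL_def by (rule exI[of _ "\<lambda>x. 0"], rule exI[of _ "\<lambda>x. 0"]) simp

lemma inL_Q: "inL S E (Qop S x)"
proof -
  have "(\<Sum>z\<in>UNIV. (if z = x then mat 1 else 0) ** Qop S z) = Qop S x"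
    by (simp add: if_distrib[of "\<lambda>M. M ** _"] sum.delta' cong: if_cong)
  then show ?thesis unfolding inL_def
    by (intro exI[of _ "\<lambda>z. if z = x then mat 1 else 0"] exI[of _ "\<lambda>x. 0"]) simp
qed

lemma finite_Ed: "finite (Ed (E :: 'v::finite \<Rightarrow> _))"
  by (rule finite_subset[of _ UNIV]) auto

lemma inL_P2:
  fixes e :: "'v::finite set" and S :: "(complex ^ 'd::finite) set"
  assumes e: "e \<in> Ed E"
  shows "inL S E (P2op e :: ('v, 'd) oper)"
proof -
  have "(\<Sum>f\<in>Ed E. (if f = e then mat 1 else 0) ** P2op f) = (P2op e :: ('v, 'd) oper)"
    using e finite_Ed by (simp add: if_distrib[of "\<lambda>M. M ** _"] sum.delta' cong: if_cong)
  then have "(P2op e :: ('v, 'd) oper) = (\<Sum>x\<in>UNIV. (\<lambda>z. 0 :: ('v, 'd) oper) x ** Qop S x)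
      + (\<Sum>f\<in>Ed E. (\<lambda>f. if f = e then mat 1 else 0) f ** P2op f)" by simp
  then show ?thesis unfolding inL_def apply - apply (rule exI) apply (rule exI) apply assumption done
qed

lemma inL_sum: "(\<And>i. i \<in> I \<Longrightarrow> inL S E (f i)) \<Longrightarrow> inL S E (sum f I)"
  by (induct I rule: infinite_finite_induct) (auto intro: inL_add inL_zero)

lemma inL_comp:
  assumes "inL S E (mat 1 - perm_op \<sigma>)" "inL S E (mat 1 - perm_op \<rho>)"
  shows "inL S E (mat 1 - perm_op (\<rho> \<circ> \<sigma>))"
proof -
  have eq: "mat 1 - perm_op (\<rho> \<circ> \<sigma>) = (mat 1 - perm_op \<sigma>) + perm_op \<sigma> ** (mat 1 - perm_op \<rho>)"
    by (simp add: perm_mult[symmetric] matrix_sub_ldistrib')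
  show ?thesis unfolding eq by (intro inL_add inL_lmul assms)
qed

lemma inL_edge:
  fixes S :: "(complex ^ 'd::finite) set" and x y :: "'v::finite"
  assumes "E x y" "\<And>x. \<not> E x x"
  shows "inL S E (mat 1 - perm_op (Transposition.transpose x y) :: ('v, 'd) oper)"
proof -
  have xy: "x \<noteq> y" using assms by auto
  have "(mat 1 - perm_op (Transposition.transpose x y) :: ('v, 'd) oper) = mat 2 ** P2op {x, y}"
    by (simp add: P2op_def swp_pair[OF xy] mat2_Aop)
  moreover have "{x, y} \<in> Ed E" using assms(1) by (auto simp: Ed_def)
  ultimately show ?thesis by (simp add: inL_lmul inL_P2)
qed

lemma inL_transp:
  fixes S :: "(complex ^ 'd::finite) set" and a b :: "'v::finite"
  assumes conn: "E\<^sup>*\<^sup>* a b" and irr: "\<And>x. \<not> E x x"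
  shows "inL S E (mat 1 - perm_op (Transposition.transpose a b) :: ('v, 'd) oper)"
  using conn
proof (induct rule: rtranclp_induct)
  case base
  then show ?case by (simp add: perm_id perm_id[unfolded id_def] inL_zero)
next
  case (step c b)
  show ?case
  proof (cases "a = b")
    case True then show ?thesis by (simp add: perm_id perm_id[unfolded id_def] inL_zero)
  next
    case False
    show ?thesis
    proof (cases "a = c")
      case True then show ?thesis using inL_edge[of E c b S, OF step(2) irr] by simp
    next
      case False
      have cb: "c \<noteq> b" using step irr by metis
      have eq: "Transposition.transpose a b = Transposition.transpose c b \<circ> (Transposition.transpose a c \<circ> Transposition.transpose c b)"
        using False cb \<open>a \<noteq> b\<close> by (auto simp: fun_eq_iff Transposition.transpose_def)
      have e: "inL S E (mat 1 - perm_op (Transposition.transpose c b) :: ('v, 'd) oper)" using inL_edge[of E c b S, OF step(2) irr] by simp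
      show ?thesis unfolding eq
        by (rule inL_comp[OF inL_comp[OF e step(3)] e])
    qed
  qed
qed

lemma inL_perm:
  fixes S :: "(complex ^ 'd::finite) set"
  assumes conn: "\<And>x y. E\<^sup>*\<^sup>* x y" and irr: "\<And>x. \<not> E x x"
    and p: "(\<sigma> :: 'v::finite \<Rightarrow> 'v) permutes UNIV"
  shows "inL S E (mat 1 - (perm_op \<sigma> :: ('v, 'd) oper))"
proof -
  have fin: "finite (UNIV :: 'v set)" by simp
  show ?thesis using p fin
proof (induct rule: permutes_induct)
  case id
  then show ?case by (simp add: perm_id perm_id[unfolded id_def] inL_zero)
next
  case (swap a b p)
  then show ?case using inL_comp[OF swap(4) inL_transp[OF conn irr]] by blast
qed
qed



lemma ifmul_r: "(x::complex) * (if P then 1 else 0) = (if P then x else 0)" by simp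

definition PtX :: "(complex ^ 'd) set \<Rightarrow> 'v set \<Rightarrow> ('v::finite, 'd::finite) oper" where
  "PtX S X = (\<chi> a b. if agree X a b then (\<Prod>z\<in>X. pmat S $ a z $ b z) else 0)"

lemma PtX_empty: "PtX S {} = mat 1"
proof -
  have "agree {} a b = (a = b)" for a b :: "'a \<Rightarrow> 'b" by (auto simp: agree_def)
  then show ?thesis by (simp add: vec_eq_iff PtX_def mat_def)
qed

lemma PtX_insert:
  assumes x: "x \<notin> X" and fin: "finite X"
  shows "PtX S (insert x X) = PtX S X ** loc x (pmat S)"
proof -
  have "(PtX S X ** loc x (pmat S)) $ a $ b = PtX S (insert x X) $ a $ b" for a b
  proof -
    have "(PtX S X ** loc x (pmat S)) $ a $ b
        = (\<Sum>c\<in>UNIV. if agree {x} b c then PtX S X $ a $ c * pmat S $ c x $ b x else 0)"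
      by (auto simp: matrix_matrix_mult_def loc_def agree_sym intro!: sum.cong)
    also have "\<dots> = (\<Sum>d\<in>UNIV. PtX S X $ a $ (b(x := d)) * pmat S $ d $ b x)"
      by (subst sum_agree1) simp
    also have "\<dots> = (\<Sum>d\<in>UNIV. if d = a x then (if agree (insert x X) a b then
          (\<Prod>z\<in>X. pmat S $ a z $ b z) * pmat S $ a x $ b x else 0) else 0)"
    proof (rule sum.cong[OF refl])
      fix d
      have ag: "agree X a (b(x := d)) = (d = a x \<and> agree (insert x X) a b)"
        using x unfolding agree_def by (auto split: if_splits)
      have pr: "(\<Prod>z\<in>X. pmat S $ a z $ (b(x := d)) z) = (\<Prod>z\<in>X. pmat S $ a z $ b z)"
        using x by (intro prod.cong) auto
      show "PtX S X $ a $ (b(x := d)) * pmat S $ d $ b x = (if d = a x then (if agree (insert x X) a b then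
          (\<Prod>z\<in>X. pmat S $ a z $ b z) * pmat S $ a x $ b x else 0) else 0)"
        unfolding PtX_def vec_lambda_beta ag pr by simp
    qed
    also have "\<dots> = PtX S (insert x X) $ a $ b"
      using x fin by (simp add: PtX_def mult.commute)
    finally show ?thesis by simp
  qed
  then show ?thesis by (simp add: vec_eq_iff)
qed

lemma PtX_minus:
  assumes "finite X"
  shows "inL S E (mat 1 - PtX S X)"
  using assms
proof (induct X rule: finite_induct)
  case empty
  then show ?case by (simp add: PtX_empty inL_zero)
next
  case (insert x X)
  have eq: "mat 1 - PtX S (insert x X) = (mat 1 - PtX S X) + PtX S X ** Qop S x"
    using insert by (simp add: PtX_insert Qop_def loc_one_minus matrix_sub_ldistrib')
  show ?case unfolding eq by (intro inL_add inL_lmul inL_Q insert)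
qed

lemma PtX_tensor:
  assumes "finite X"
  shows "PtX S X *v tensor_vec f = tensor_vec (\<lambda>z. if z \<in> X then pmat S *v f z else f z)"
  using assms
proof (induct X arbitrary: f rule: finite_induct)
  case empty
  then show ?case by (simp add: PtX_empty)
next
  case (insert x X)
  have "PtX S (insert x X) *v tensor_vec f = PtX S X *v (loc x (pmat S) *v tensor_vec f)"
    using insert by (simp add: PtX_insert matrix_vector_mul_assoc)
  also have "\<dots> = tensor_vec (\<lambda>z. if z \<in> X then pmat S *v (f(x := pmat S *v f x)) z else (f(x := pmat S *v f x)) z)"
    using insert(3) by (simp add: loc_tensor)
  also have "(\<lambda>z. if z \<in> X then pmat S *v (f(x := pmat S *v f x)) z else (f(x := pmat S *v f x)) z)
      = (\<lambda>z. if z \<in> insert x X then pmat S *v f z else f z)"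
    using insert by (auto simp: fun_eq_iff)
  finally show ?case .
qed

definition Pt :: "(complex ^ 'd) set \<Rightarrow> ('v::finite, 'd::finite) oper" where
  "Pt S = PtX S UNIV"

lemma Pt_perm:
  assumes p: "\<sigma> permutes UNIV"
  shows "perm_op \<sigma> ** Pt S = Pt S ** perm_op \<sigma>"
proof -
  have ag: "agree UNIV a b" for a b :: "'a \<Rightarrow> 'b" by (simp add: agree_def)
  have "(perm_op \<sigma> ** Pt S) $ a $ b = (Pt S ** perm_op \<sigma>) $ a $ b" for a b
  proof -
    have eq: "(a = c \<circ> \<sigma>) = (c = a \<circ> inv \<sigma>)" for c
      using p by (auto simp: fun_eq_iff permutes_inverses)
    have "(perm_op \<sigma> ** Pt S) $ a $ b = Pt S $ (a \<circ> inv \<sigma>) $ b"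
      by (simp add: matrix_matrix_mult_def perm_op_def eq ifmul sum.delta')
    also have "\<dots> = (\<Prod>z\<in>UNIV. pmat S $ a (inv \<sigma> z) $ b z)"
      by (simp add: Pt_def PtX_def ag)
    also have "\<dots> = (\<Prod>z\<in>UNIV. pmat S $ a (inv \<sigma> (\<sigma> z)) $ b (\<sigma> z))"
      by (subst prod.permute[OF p]) (simp add: o_def)
    also have "\<dots> = (\<Prod>z\<in>UNIV. pmat S $ a z $ b (\<sigma> z))"
      using p by (simp add: permutes_inverses)
    also have "\<dots> = Pt S $ a $ (b \<circ> \<sigma>)"
      by (simp add: Pt_def PtX_def ag)
    also have "\<dots> = (Pt S ** perm_op \<sigma>) $ a $ b"
      by (simp add: matrix_matrix_mult_def perm_op_def ifmul_r sum.delta')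
    finally show ?thesis .
  qed
  then show ?thesis by (simp add: vec_eq_iff)
qed

lemma Pt_fix:
  fixes S :: "(complex ^ 'd::finite) set" and v :: "('v::finite, 'd) state"
  assumes S: "csubspace S" and v: "v \<in> tensor_sub S"
  shows "Pt S *v v = v"
proof (rule fix_tensor[OF _ v])
  fix f :: "'v \<Rightarrow> complex ^ 'd" assume "\<forall>x. f x \<in> S"
  then have "(\<lambda>z. if z \<in> UNIV then pmat S *v f z else f z) = f" using S by (simp add: pmat_fix fun_eq_iff)
  then show "Pt S *v tensor_vec f = tensor_vec f" by (simp add: Pt_def PtX_tensor)
qed

lemma axis_tensor: "(axis c 1 :: ('v::finite, 'd::finite) state) = tensor_vec (\<lambda>x. axis (c x) 1)"
proof -
  have "(\<Prod>x\<in>UNIV. axis (c x) 1 $ a x) = (if c = a then 1 else 0 :: complex)" for a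
  proof (cases "c = a")
    case True then show ?thesis by (simp add: axis_def)
  next
    case False
    then obtain x where "c x \<noteq> a x" by auto
    then show ?thesis using False by (simp add: axis_def prod_zero[of UNIV] exI[of _ x])
  qed
  then show ?thesis by (simp add: vec_eq_iff tensor_vec_def axis_def)
qed

lemma Pt_range:
  assumes S: "csubspace S"
  shows "Pt S *v w \<in> (tensor_sub S :: ('v::finite, 'd::finite) state set)"
proof -
  have "Pt S *v w = Pt S *v (\<Sum>c\<in>UNIV. w $ c *s axis c 1)" by (simp add: basis_expansion)
  also have "\<dots> = (\<Sum>c\<in>UNIV. w $ c *s (Pt S *v tensor_vec (\<lambda>x. axis (c x) 1)))"
    by (simp add: vec.sum vector_scalar_commute axis_tensor)
  also have "\<dots> \<in> tensor_sub S"
    unfolding tensor_sub_span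
  proof (intro vec.span_sum vec.span_scale vec.span_base)
    fix c :: "'v \<Rightarrow> 'd"
    show "Pt S *v tensor_vec (\<lambda>x. axis (c x) 1) \<in> {tensor_vec f |f. \<forall>x. f x \<in> S}"
      using pmat_in[OF S] by (auto simp: Pt_def PtX_tensor)
  qed
  finally show ?thesis .
qed



definition Gp :: "('v \<Rightarrow> 'v) set" where "Gp = {\<sigma>. \<sigma> permutes UNIV}"

lemma Gp_fin: "finite (Gp :: ('v::finite \<Rightarrow> 'v) set)"
  unfolding Gp_def by (rule finite_permutations) simp

lemma Gp_card: "card (Gp :: ('v::finite \<Rightarrow> 'v) set) \<noteq> 0"
proof -
  have "id \<in> (Gp :: ('v \<Rightarrow> 'v) set)" by (simp add: Gp_def)
  then show ?thesis using Gp_fin by auto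
qed

definition cG :: "('v::finite, 'd::finite) oper" where
  "cG = mat (1 / of_nat (card (Gp :: ('v \<Rightarrow> 'v) set)))"

definition Symop :: "('v::finite, 'd::finite) oper" where
  "Symop = (\<Sum>\<sigma>\<in>Gp. cG ** perm_op \<sigma>)"

lemma mat_comm: "(A :: complex^'n^'n) ** mat c = mat c ** A"
  by (simp add: vec_eq_iff matrix_matrix_mult_def mat_def ifmul2 mult.commute
      if_distrib[of "\<lambda>x. _ * x"] sum.delta cong: if_cong)

lemma mat_mv: "mat c *v (v :: complex^'n) = c *s v"
  by (simp add: vec_eq_iff matrix_vector_mult_def mat_def ifmul2 sum.delta)

lemma sum_mv: "sum f I *v v = (\<Sum>i\<in>I. f i *v v)"
  by (induct I rule: infinite_finite_induct) (auto simp: matrix_vector_mult_add_rdistrib)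

lemma sum_mat: "finite I \<Longrightarrow> (\<Sum>i\<in>I. mat c) = (mat (of_nat (card I) * c) :: complex^'n^'n)"
proof (induct I rule: finite_induct)
  case empty then show ?case by (simp del: sum_constant)
next
  case (insert x F)
  have "mat c + mat (of_nat (card F) * c) = (mat (of_nat (card (insert x F)) * c) :: complex^'n^'n)"
    using insert by (simp add: vec_eq_iff mat_def algebra_simps)
  then show ?case using insert by (simp del: sum_constant)
qed

lemma Sym_left:
  assumes p: "\<rho> permutes UNIV"
  shows "perm_op \<rho> ** Symop = (Symop :: ('v::finite, 'd::finite) oper)"
proof -
  have "perm_op \<rho> ** Symop = (\<Sum>\<sigma>\<in>Gp. cG ** perm_op (\<sigma> \<circ> \<rho>) :: ('v, 'd) oper)"
    unfolding Symop_def mm_sum_l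
  proof (rule sum.cong[OF refl])
    fix \<sigma>
    have "perm_op \<rho> ** (cG ** perm_op \<sigma>) = (perm_op \<rho> ** cG) ** (perm_op \<sigma> :: ('v, 'd) oper)"
      by (simp add: matrix_mul_assoc)
    also have "\<dots> = (cG ** perm_op \<rho>) ** perm_op \<sigma>" by (simp add: cG_def mat_comm)
    also have "\<dots> = cG ** perm_op (\<sigma> \<circ> \<rho>)" by (simp add: matrix_mul_assoc[symmetric] perm_mult)
    finally show "perm_op \<rho> ** (cG ** perm_op \<sigma>) = (cG ** perm_op (\<sigma> \<circ> \<rho>) :: ('v, 'd) oper)" .
  qed
  also have "\<dots> = Symop"
    unfolding Symop_def
    by (rule sum.reindex_bij_witness[where i = "\<lambda>\<tau>. \<tau> \<circ> inv \<rho>" and j = "\<lambda>\<sigma>. \<sigma> \<circ> \<rho>"])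
       (use p in \<open>auto simp: Gp_def o_assoc[symmetric] permutes_inv_o permutes_compose permutes_inv\<close>)
  finally show ?thesis .
qed

lemma Sym_right:
  assumes p: "\<rho> permutes UNIV"
  shows "Symop ** perm_op \<rho> = (Symop :: ('v::finite, 'd::finite) oper)"
proof -
  have "Symop ** perm_op \<rho> = (\<Sum>\<sigma>\<in>Gp. cG ** perm_op (\<rho> \<circ> \<sigma>) :: ('v, 'd) oper)"
    unfolding Symop_def mm_sum_r
    by (simp add: matrix_mul_assoc[symmetric] perm_mult)
  also have "\<dots> = Symop"
    unfolding Symop_def
    by (rule sum.reindex_bij_witness[where i = "\<lambda>\<tau>. inv \<rho> \<circ> \<tau>" and j = "\<lambda>\<sigma>. \<rho> \<circ> \<sigma>"])
       (use p in \<open>auto simp: Gp_def o_assoc permutes_inv_o permutes_compose permutes_inv\<close>)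
  finally show ?thesis .
qed

lemma sum_scale_const: "finite I \<Longrightarrow> (\<Sum>i\<in>I. c *s (v :: complex^'n)) = (of_nat (card I) * c) *s v"
  by (induct I rule: finite_induct) (simp_all del: sum_constant add: vec_eq_iff algebra_simps)

lemma Sym_fix:
  assumes v: "v \<in> Sym S"
  shows "(Symop :: ('v::finite, 'd::finite) oper) *v v = v"
proof -
  have "(Symop :: ('v, 'd) oper) *v v = (\<Sum>\<sigma>\<in>(Gp :: ('v \<Rightarrow> 'v) set). (1 / of_nat (card (Gp :: ('v \<Rightarrow> 'v) set))) *s v)"
    unfolding Symop_def sum_mv
  proof (rule sum.cong)
    fix \<sigma> :: "'v \<Rightarrow> 'v" assume "\<sigma> \<in> Gp"
    then have "perm_op \<sigma> *v v = v" using v by (simp add: Gp_def Sym_def)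
    then show "(cG ** perm_op \<sigma>) *v v = (1 / of_nat (card (Gp :: ('v \<Rightarrow> 'v) set))) *s v"
      by (simp add: cG_def mat_mv matrix_vector_mul_assoc[symmetric])
  qed (rule refl)
  also have "\<dots> = v"
    using Gp_card[where 'v='v] Gp_fin[where 'v='v] by (simp del: sum_constant add: sum_scale_const)
  finally show ?thesis .
qed

lemma Sym_one_minus:
  "mat 1 - (Symop :: ('v::finite, 'd::finite) oper) = (\<Sum>\<sigma>\<in>Gp. cG ** (mat 1 - perm_op \<sigma>))"
proof -
  have "(\<Sum>\<sigma>\<in>Gp. cG ** (mat 1 - perm_op \<sigma>)) = (\<Sum>\<sigma>\<in>(Gp :: ('v \<Rightarrow> 'v) set). (cG :: ('v, 'd) oper)) - Symop"
    unfolding Symop_def by (simp add: matrix_sub_ldistrib' sum_subtractf)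
  also have "(\<Sum>\<sigma>\<in>(Gp :: ('v \<Rightarrow> 'v) set). (cG :: ('v, 'd) oper)) = mat 1"
    unfolding cG_def using Gp_fin Gp_card[where 'v='v] by (simp del: sum_constant add: sum_mat)
  finally show ?thesis by simp
qed

lemma perm_span:
  assumes p: "\<sigma> permutes UNIV" and u: "u \<in> tensor_sub S"
  shows "perm_op \<sigma> *v u \<in> (tensor_sub S :: ('v::finite, 'd::finite) state set)"
proof -
  have "u \<in> vec.span {tensor_vec f | f. \<forall>x. f x \<in> S}" using u tensor_sub_span by blast
  then show ?thesis
  proof (induct rule: vec.span_induct)
    show "vec.subspace {u. perm_op \<sigma> *v u \<in> (tensor_sub S :: ('v, 'd) state set)}"
      by (simp add: vec.subspace_def tensor_sub_span matrix_vector_right_distrib vector_scalar_commute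
          vec.span_zero vec.span_add vec.span_scale)
  next
    fix x :: "('v, 'd) state" assume "x \<in> {tensor_vec f | f. \<forall>x. f x \<in> S}"
    then obtain f where "x = tensor_vec f" "\<forall>x. f x \<in> S" by blast
    then show "perm_op \<sigma> *v x \<in> (tensor_sub S :: ('v, 'd) state set)"
      using p by (auto simp: perm_tensor tensor_sub_span intro!: vec.span_base)
  qed
qed

lemma Sym_range_sub:
  assumes u: "u \<in> tensor_sub S"
  shows "(Symop :: ('v::finite, 'd::finite) oper) *v u \<in> tensor_sub S"
proof -
  have "(Symop :: ('v, 'd) oper) *v u = (\<Sum>\<sigma>\<in>Gp. (1 / of_nat (card (Gp :: ('v \<Rightarrow> 'v) set))) *s (perm_op \<sigma> *v u))"
    unfolding Symop_def sum_mv
    by (simp add: cG_def mat_mv matrix_vector_mul_assoc[symmetric])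
  also have "\<dots> \<in> tensor_sub S"
    unfolding tensor_sub_span
    by (intro vec.span_sum vec.span_scale)
       (use u perm_span in \<open>auto simp: Gp_def tensor_sub_span\<close>)
  finally show ?thesis .
qed



definition Pi_op :: "(complex ^ 'd) set \<Rightarrow> ('v::finite, 'd::finite) oper" where
  "Pi_op S = Symop ** Pt S"

lemma Pi_fix:
  fixes S :: "(complex ^ 'd::finite) set" and v :: "('v::finite, 'd) state"
  assumes S: "csubspace S" and v: "v \<in> Sym S"
  shows "(Pi_op S :: ('v, 'd) oper) *v v = v"
proof -
  have "v \<in> tensor_sub S" using v by (simp add: Sym_def)
  then have "(Pt S :: ('v, 'd) oper) *v v = v" by (rule Pt_fix[OF S])
  then show ?thesis using Sym_fix[OF v] by (simp add: Pi_op_def matrix_vector_mul_assoc[symmetric])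
qed

lemma Pi_range:
  assumes S: "csubspace S"
  shows "(Pi_op S :: ('v::finite, 'd::finite) oper) *v w \<in> Sym S"
proof -
  have t: "(Pi_op S :: ('v, 'd) oper) *v w \<in> tensor_sub S"
    unfolding Pi_op_def matrix_vector_mul_assoc[symmetric]
    by (rule Sym_range_sub[OF Pt_range[OF S]])
  have "perm_op \<sigma> *v ((Pi_op S :: ('v, 'd) oper) *v w) = Pi_op S *v w" if "\<sigma> permutes UNIV" for \<sigma>
    using that by (simp add: Pi_op_def matrix_vector_mul_assoc matrix_mul_assoc Sym_left)
  then show ?thesis using t by (simp add: Sym_def)
qed

lemma Pi_left: "\<sigma> permutes UNIV \<Longrightarrow> perm_op \<sigma> ** Pi_op S = (Pi_op S :: ('v::finite, 'd::finite) oper)"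
  by (simp add: Pi_op_def matrix_mul_assoc Sym_left)

lemma Pi_right: "\<sigma> permutes UNIV \<Longrightarrow> Pi_op S ** perm_op \<sigma> = (Pi_op S :: ('v::finite, 'd::finite) oper)"
  by (simp add: Pi_op_def matrix_mul_assoc[symmetric] Pt_perm[symmetric]) (simp add: matrix_mul_assoc Sym_right)

lemma Pi_minus:
  fixes S :: "(complex ^ 'd::finite) set"
  assumes conn: "\<And>x y. E\<^sup>*\<^sup>* x y" and irr: "\<And>x. \<not> E x x"
  shows "inL S E (mat 1 - (Pi_op S :: ('v::finite, 'd) oper))"
proof -
  have eq: "mat 1 - (Pi_op S :: ('v, 'd) oper) = (mat 1 - PtX S UNIV) + (\<Sum>\<sigma>\<in>Gp. cG ** (Pt S ** (mat 1 - perm_op \<sigma>)))"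
  proof -
    have "(mat 1 - (Symop :: ('v, 'd) oper)) ** Pt S = (\<Sum>\<sigma>\<in>Gp. cG ** (Pt S ** (mat 1 - perm_op \<sigma>)))"
      unfolding Sym_one_minus mm_sum_r
    proof (rule sum.cong[OF refl])
      fix \<sigma> :: "'v \<Rightarrow> 'v" assume "\<sigma> \<in> Gp"
      then have p: "\<sigma> permutes UNIV" by (simp add: Gp_def)
      have "(mat 1 - perm_op \<sigma>) ** Pt S = (Pt S ** (mat 1 - perm_op \<sigma>) :: ('v, 'd) oper)"
        by (simp add: matrix_sub_rdistrib' matrix_sub_ldistrib' Pt_perm[OF p])
      then show "cG ** (mat 1 - perm_op \<sigma>) ** Pt S = (cG ** (Pt S ** (mat 1 - perm_op \<sigma>)) :: ('v, 'd) oper)"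
        by (simp add: matrix_mul_assoc[symmetric])
    qed
    then show ?thesis
      unfolding Pi_op_def Pt_def[symmetric] by (simp add: matrix_sub_rdistrib' algebra_simps)
  qed
  show ?thesis unfolding eq
    by (intro inL_add PtX_minus inL_sum inL_lmul inL_perm[OF conn irr]) (auto simp: Gp_def)
qed



theorem corollary5p1:
  fixes E :: "'v::finite \<Rightarrow> 'v \<Rightarrow> bool"
    and S :: "(complex ^ 'd::finite) set"
    and H :: "('v, 'd) oper"
  assumes E_sym: "\<And>x y. E x y \<Longrightarrow> E y x"
    and E_irrefl: "\<And>x. \<not> E x x"
    and connected: "\<And>x y. E\<^sup>*\<^sup>* x y"
    and S_sub: "csubspace S"
    and invariant: "\<And>v. v \<in> Sym S \<Longrightarrow> H *v v \<in> (Sym S :: ('v, 'd) state set)"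
  shows "\<exists>HA HZ. H = HA + HZ \<and> totally_symmetric HZ \<and> annihilates HA (Sym S)
     \<and> (\<exists>(h1 :: 'v \<Rightarrow> ('v, 'd) oper) (P1 :: 'v \<Rightarrow> ('v, 'd) oper)
          (h2 :: 'v set \<Rightarrow> ('v, 'd) oper) (P2 :: 'v set \<Rightarrow> ('v, 'd) oper).
          (\<forall>x. orth_proj (P1 x) \<and> acts_only_on {x} (P1 x) \<and> annihilates (P1 x) (Sym S))
        \<and> (\<forall>x y. E x y \<longrightarrow> orth_proj (P2 {x, y}) \<and> acts_only_on {x, y} (P2 {x, y})
                         \<and> annihilates (P2 {x, y}) (Sym S))
        \<and> HA = (\<Sum>x\<in>UNIV. h1 x ** P1 x)
               + (\<Sum>e\<in>{{x, y} | x y. E x y}. h2 e ** P2 e))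
     \<and> (\<forall>v \<in> Sym S. \<forall>\<mu>::complex. v \<noteq> 0 \<longrightarrow> HZ *v v = \<mu> *s v \<longrightarrow> H *v v = \<mu> *s v)"
proof -
  define P where "P = (Pi_op S :: ('v, 'd) oper)"
  define HZ where "HZ = P ** H ** P"
  define HA where "HA = H - HZ"
  have Pfix: "P *v v = v" if "v \<in> Sym S" for v using Pi_fix[OF S_sub that] by (simp add: P_def)
  have Prange: "P *v w \<in> Sym S" for w using Pi_range[OF S_sub] by (simp add: P_def)
  have HZv: "HZ *v v = H *v v" if v: "v \<in> Sym S" for v
    using Pfix[OF v] Pfix[OF invariant[OF v]] by (simp add: HZ_def matrix_vector_mul_assoc[symmetric])
  have HP: "H ** P = HZ"
    unfolding matrix_eq HZ_def
  proof
    fix w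
    show "(H ** P) *v w = (P ** H ** P) *v w"
      using Pfix[OF invariant[OF Prange[of w]]] by (simp add: matrix_vector_mul_assoc[symmetric])
  qed
  have HAeq: "HA = H ** (mat 1 - P)"
    by (simp add: HA_def matrix_sub_ldistrib' HP)
  have "inL S E HA"
    unfolding HAeq P_def by (rule inL_lmul[OF Pi_minus[OF connected E_irrefl]])
  then obtain h1 h2 where hh: "HA = (\<Sum>x\<in>UNIV. h1 x ** Qop S x) + (\<Sum>e\<in>Ed E. h2 e ** P2op e)"
    unfolding inL_def by blast
  have tsym: "totally_symmetric HZ"
    unfolding totally_symmetric_def
  proof (intro allI impI)
    fix \<sigma> :: "'v \<Rightarrow> 'v" assume p: "\<sigma> permutes UNIV"
    have pi: "inv \<sigma> permutes UNIV" using p by (rule permutes_inv)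
    have l: "perm_op \<sigma> ** P = P" unfolding P_def by (rule Pi_left[OF p])
    have r: "P ** perm_op (inv \<sigma>) = P" unfolding P_def by (rule Pi_right[OF pi])
    have "perm_op \<sigma> ** HZ ** matrix_inv (perm_op \<sigma>) = ((perm_op \<sigma> ** P) ** H) ** (P ** perm_op (inv \<sigma>))"
      by (simp add: HZ_def perm_matrix_inv[OF p] matrix_mul_assoc)
    also have "\<dots> = HZ"
      by (simp add: l r HZ_def)
    finally show "perm_op \<sigma> ** HZ ** matrix_inv (perm_op \<sigma>) = HZ" .
  qed
  have ann: "annihilates HA (Sym S)"
    unfolding annihilates_def HA_def using HZv by (simp add: matrix_vector_mult_diff_rdistrib)
  have P1: "orth_proj (Qop S x :: ('v, 'd) oper) \<and> acts_only_on {x} (Qop S x :: ('v, 'd) oper)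
      \<and> annihilates (Qop S x :: ('v, 'd) oper) (Sym S)" for x
  proof (intro conjI)
    show "orth_proj (Qop S x :: ('v, 'd) oper)" by (rule Q_orth[OF S_sub])
    show "acts_only_on {x} (Qop S x :: ('v, 'd) oper)" unfolding Qop_def by (rule loc_acts)
    show "annihilates (Qop S x :: ('v, 'd) oper) (Sym S)"
      unfolding annihilates_def using Q_ann[OF S_sub] by blast
  qed
  have P2: "orth_proj (P2op {x, y} :: ('v, 'd) oper) \<and> acts_only_on {x, y} (P2op {x, y} :: ('v, 'd) oper)
      \<and> annihilates (P2op {x, y} :: ('v, 'd) oper) (Sym S)" if "E x y" for x y
  proof -
    have xy: "x \<noteq> y" using that E_irrefl by auto
    show ?thesis unfolding P2op_def swp_pair[OF xy]
    proof (intro conjI)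
      show "orth_proj (Aop (Transposition.transpose x y) :: ('v, 'd) oper)" by (rule Aop_orth)
      show "acts_only_on {x, y} (Aop (Transposition.transpose x y) :: ('v, 'd) oper)" by (rule Aop_acts)
      show "annihilates (Aop (Transposition.transpose x y) :: ('v, 'd) oper) (Sym S)"
        unfolding annihilates_def using Aop_ann by blast
    qed
  qed
  have eig: "\<forall>v \<in> Sym S. \<forall>\<mu>::complex. v \<noteq> 0 \<longrightarrow> HZ *v v = \<mu> *s v \<longrightarrow> H *v v = \<mu> *s v"
    using HZv by simp
  show ?thesis
    apply (rule exI[of _ HA], rule exI[of _ HZ])
    apply (intro conjI)
        apply (simp add: HA_def)
       apply (rule tsym)
      apply (rule ann)
     apply (rule exI[of _ h1], rule exI[of _ "Qop S"], rule exI[of _ h2], rule exI[of _ P2op])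
     apply (intro conjI)
       apply (simp add: P1)
      apply (simp add: P2)
     apply (simp add: hh Ed_def)
    apply (rule eig)
    done
qed

end
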